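(* Fix $\alpha\in(0,1)$. Every $\alpha$-power piecewise linear function $g:\mathbb{R}\to\mathbb{R}$ is exactly representable by a width-one leaky-ReLU network: there exist $L\in\mathbb{N}$ and parameters $w_i,b_i\in\mathbb{R}$ such that the corresponding $f_L\in\mathcal{N}_1(L)$ satisfies $g(x)=f_L(x)$ for all $x\in\mathbb{R}$.
   Context: Leaky-ReLU: $\sigma_\alpha(x)=\max(\alpha x,x)$. $\mathcal{N}_1(L)$ is the set of functions $f_L:\mathbb{R}\to\mathbb{R}$ with $f_0(x)=w_0x+b_0$, $f_k(x)=w_k\sigma_\alpha(f_{k-1}(x))+b_k$ ($k=1,\dots,L$), $w_k,b_k\in\mathbb{R}$. A piecewise linear (PL) function is a continuous function $g:\mathbb{R}\to\mathbb{R}$ which is affine on each of finitely many intervals partitioning $\mathbb{R}$ (separated by finitely many breakpoints). A PL function $g$ is called $\alpha$-power PL if there is a constant $c\in\mathbb{R}$ such that the slope of every linear piece of $g$ lies in $\{c\alpha^k: k\in\mathbb{Z}\}$. *)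

theory Defs
  imports "HOL-Analysis.Analysis"
begin

definition leaky_relu :: "real \<Rightarrow> real \<Rightarrow> real" where
  "leaky_relu \<alpha> x = max (\<alpha> * x) x"

text \<open>Width-one leaky-ReLU network. The parameter list ps = [(w_0,b_0),...,(w_L,b_L)]
  (so length ps = L+1). f_0 x = w_0 x + b_0, f_k x = w_k sigma(f_(k-1) x) + b_k.\<close>
fun net_aux :: "real \<Rightarrow> (real \<times> real) list \<Rightarrow> real \<Rightarrow> real" where
  "net_aux \<alpha> [] y = y"
| "net_aux \<alpha> ((w, b) # ps) y = net_aux \<alpha> ps (w * leaky_relu \<alpha> y + b)"

fun net :: "real \<Rightarrow> (real \<times> real) list \<Rightarrow> real \<Rightarrow> real" where
  "net \<alpha> [] x = x"
| "net \<alpha> ((w0, b0) # ps) x = net_aux \<alpha> ps (w0 * x + b0)"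

definition N1 :: "real \<Rightarrow> nat \<Rightarrow> (real \<Rightarrow> real) set" where
  "N1 \<alpha> L = {net \<alpha> ps | ps. length ps = L + 1}"

definition piece :: "real list \<Rightarrow> nat \<Rightarrow> real set" where
  "piece xs i =
     (if xs = [] then UNIV
      else if i = 0 then {.. xs ! 0}
      else if i = length xs then {xs ! (i - 1) ..}
      else {xs ! (i - 1) .. xs ! i})"

definition pl_with :: "(real \<Rightarrow> real) \<Rightarrow> real list \<Rightarrow> real list \<Rightarrow> real list \<Rightarrow> bool" where
  "pl_with g xs ms bs \<longleftrightarrow>
     sorted_wrt (<) xs \<and> length ms = length xs + 1 \<and> length bs = length xs + 1 \<and>
     (\<forall>i \<le> length xs. \<forall>x \<in> piece xs i. g x = ms ! i * x + bs ! i)"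

definition piecewise_linear :: "(real \<Rightarrow> real) \<Rightarrow> bool" where
  "piecewise_linear g \<longleftrightarrow> continuous_on UNIV g \<and> (\<exists>xs ms bs. pl_with g xs ms bs)"

definition alpha_power_pl :: "real \<Rightarrow> (real \<Rightarrow> real) \<Rightarrow> bool" where
  "alpha_power_pl \<alpha> g \<longleftrightarrow> continuous_on UNIV g \<and>
     (\<exists>xs ms bs c. pl_with g xs ms bs \<and> (\<forall>m \<in> set ms. \<exists>k::int. m = c * \<alpha> powi k))"

end

theory Submission
  imports Defs
begin

inductive rep :: "real \<Rightarrow> (real \<Rightarrow> real) \<Rightarrow> bool" for \<alpha> where
  base: "rep \<alpha> (\<lambda>x. w * x + b)"
| step: "rep \<alpha> f \<Longrightarrow> rep \<alpha> (\<lambda>x. w * leaky_relu \<alpha> (f x) + b)"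

lemma net_aux_snoc: "net_aux \<alpha> (ps @ [(w,b)]) y = w * leaky_relu \<alpha> (net_aux \<alpha> ps y) + b"
  by (induction \<alpha> ps y rule: net_aux.induct) auto

lemma rep_net: "rep \<alpha> f \<Longrightarrow> \<exists>ps. length ps \<ge> 1 \<and> f = net \<alpha> ps"
proof (induction rule: rep.induct)
  case (base w b)
  show ?case by (rule exI[of _ "[(w,b)]"]) (auto intro!: ext)
next
  case (step f w b)
  then obtain ps where ps: "length ps \<ge> 1" "f = net \<alpha> ps" by auto
  then obtain w0 b0 ps' where pe: "ps = (w0,b0)#ps'" by (cases ps) auto
  show ?case by (rule exI[of _ "ps @ [(w,b)]"]) (auto simp: ps(2) pe net_aux_snoc intro!: ext)
qed

lemma rep_affine_post: "rep \<alpha> f \<Longrightarrow> rep \<alpha> (\<lambda>x. a * f x + c)"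
proof (induction rule: rep.induct)
  case (base w b)
  have "rep \<alpha> (\<lambda>x. (a*w) * x + (a*b + c))" by (rule rep.base)
  moreover have "(\<lambda>x. a * (w * x + b) + c) = (\<lambda>x. (a*w) * x + (a*b + c))"
    by (auto simp: algebra_simps)
  ultimately show ?case by simp
next
  case (step f w b)
  have "rep \<alpha> (\<lambda>x. (a*w) * leaky_relu \<alpha> (f x) + (a*b + c))" by (rule rep.step) (rule step.hyps)
  moreover have "(\<lambda>x. a * (w * leaky_relu \<alpha> (f x) + b) + c)
     = (\<lambda>x. (a*w) * leaky_relu \<alpha> (f x) + (a*b + c))"
    by (auto simp: algebra_simps)
  ultimately show ?case by simp
qed

lemma rep_comp: "rep \<alpha> h \<Longrightarrow> rep \<alpha> f \<Longrightarrow> rep \<alpha> (\<lambda>x. h (f x))"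
  by (induction rule: rep.induct) (auto intro: rep.step rep_affine_post)

lemma lrelu_pos: "\<alpha> \<le> 1 \<Longrightarrow> t \<ge> 0 \<Longrightarrow> leaky_relu \<alpha> t = t"
proof -
  assume "\<alpha> \<le> 1" "t \<ge> 0"
  then have "(1-\<alpha>)*t \<ge> 0" by simp
  then show ?thesis unfolding leaky_relu_def by (simp add: max_def algebra_simps)
qed

lemma lrelu_neg: "\<alpha> \<le> 1 \<Longrightarrow> t < 0 \<Longrightarrow> leaky_relu \<alpha> t = \<alpha> * t"
proof -
  assume "\<alpha> \<le> 1" "t < 0"
  then have "(1-\<alpha>)*t \<le> 0" by (simp add: mult_nonneg_nonpos)
  then show ?thesis unfolding leaky_relu_def by (simp add: max_def algebra_simps)
qed

lemma rho_nat:
  assumes "0 < \<alpha>" "\<alpha> < 1"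
  shows "\<exists>\<phi>. rep \<alpha> \<phi> \<and> (\<forall>t. \<phi> t = (if t \<ge> 0 then t else \<alpha>^n * t))"
proof (induction n)
  case 0
  have "rep \<alpha> (\<lambda>t. 1 * t + 0)" by (rule rep.base)
  then show ?case by (intro exI[of _ "\<lambda>t. 1 * t + 0"]) auto
next
  case (Suc n)
  then obtain \<phi> where p: "rep \<alpha> \<phi>" "\<forall>t. \<phi> t = (if t \<ge> 0 then t else \<alpha>^n * t)" by auto
  have r: "rep \<alpha> (\<lambda>t. 1 * leaky_relu \<alpha> (\<phi> t) + 0)" by (rule rep.step) (rule p(1))
  have "\<forall>t. 1 * leaky_relu \<alpha> (\<phi> t) + 0 = (if t \<ge> 0 then t else \<alpha>^Suc n * t)"
  proof
    fix t show "1 * leaky_relu \<alpha> (\<phi> t) + 0 = (if t \<ge> 0 then t else \<alpha>^Suc n * t)"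
    proof (cases "t \<ge> 0")
      case True then show ?thesis using p(2) lrelu_pos assms by auto
    next
      case False
      have "\<alpha>^n * t < 0" using False assms by (simp add: mult_pos_neg)
      then show ?thesis using False p(2) lrelu_neg assms by auto
    qed
  qed
  with r show ?case by blast
qed

lemma rho_nat_inv:
  assumes "0 < \<alpha>" "\<alpha> < 1"
  shows "\<exists>\<phi>. rep \<alpha> \<phi> \<and> (\<forall>t. \<phi> t = (if t \<ge> 0 then t else inverse (\<alpha>^n) * t))"
proof (induction n)
  case 0
  have "rep \<alpha> (\<lambda>t. 1 * t + 0)" by (rule rep.base)
  then show ?case by (intro exI[of _ "\<lambda>t. 1 * t + 0"]) auto
next
  case (Suc n)
  then obtain \<phi> where p: "rep \<alpha> \<phi>" "\<forall>t. \<phi> t = (if t \<ge> 0 then t else inverse (\<alpha>^n) * t)" by auto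
  have "rep \<alpha> (\<lambda>t. (-1) * \<phi> t + 0)" by (rule rep_affine_post) (rule p(1))
  then have r: "rep \<alpha> (\<lambda>t. (-1/\<alpha>) * leaky_relu \<alpha> ((-1) * \<phi> t + 0) + 0)" by (rule rep.step)
  have "\<forall>t. (-1/\<alpha>) * leaky_relu \<alpha> ((-1) * \<phi> t + 0) + 0 = (if t \<ge> 0 then t else inverse (\<alpha>^Suc n) * t)"
  proof
    fix t show "(-1/\<alpha>) * leaky_relu \<alpha> ((-1) * \<phi> t + 0) + 0 = (if t \<ge> 0 then t else inverse (\<alpha>^Suc n) * t)"
    proof (cases "t > 0")
      case True then show ?thesis using p(2) lrelu_neg[of \<alpha> "-t"] assms by auto
    next
      case False
      have "inverse (\<alpha>^n) * t \<le> 0" using False assms by (simp add: mult_nonneg_nonpos)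
      then have "leaky_relu \<alpha> ((-1) * \<phi> t + 0) = - (inverse (\<alpha>^n) * t)"
        using False p(2) lrelu_pos[of \<alpha> "- (inverse (\<alpha>^n) * t)"] assms by auto
      then show ?thesis using False p(2) assms by (auto simp: field_simps)
    qed
  qed
  with r show ?case by blast
qed

lemma rho:
  assumes "0 < \<alpha>" "\<alpha> < 1"
  shows "\<exists>\<phi>. rep \<alpha> \<phi> \<and> (\<forall>t. \<phi> t = (if t \<ge> 0 then t else \<alpha> powi d * t))"
proof (cases "d \<ge> 0")
  case True
  then obtain n where "d = int n" by (metis nonneg_eq_int)
  then show ?thesis using rho_nat[OF assms, of n] by (simp del: if_split add: if_split)
next
  case False
  then obtain n where "d = - int n" by (metis nonneg_eq_int neg_0_le_iff_le linorder_le_cases minus_minus)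
  moreover have "\<alpha> powi d = inverse (\<alpha>^n)" using \<open>d = - int n\<close> by (simp add: power_int_minus)
  ultimately show ?thesis using rho_nat_inv[OF assms, of n] by presburger
qed

lemma mono_rho:
  fixes \<phi> :: "real \<Rightarrow> real" and k :: real
  assumes "\<forall>t. \<phi> t = (if t \<ge> 0 then t else k * t)" "k > 0"
  shows "mono \<phi>"
proof (rule monoI)
  fix s t :: real assume st: "s \<le> t"
  show "\<phi> s \<le> \<phi> t"
  proof (cases "s \<ge> 0")
    case True then show ?thesis using st assms by auto
  next
    case False
    then have "k * s < 0" using assms by (simp add: mult_pos_neg)
    moreover have "k * s \<le> k * t" using st assms by simp
    ultimately show ?thesis using False assms by auto
  qed
qed

lemma piece_Cons_Suc:
  assumes "1 \<le> i" "i \<le> length xs'"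
  shows "piece (p # xs') (Suc i) = piece xs' i"
  using assms unfolding piece_def by (auto simp: nth_Cons split: nat.splits)

lemma main_pos:
  assumes a: "0 < \<alpha>" "\<alpha> < 1" and c: "c \<ge> 0"
  shows "length xs = n \<Longrightarrow> pl_with g xs ms bs \<Longrightarrow> (\<forall>m\<in>set ms. \<exists>k::int. m = c * \<alpha> powi k)
     \<Longrightarrow> rep \<alpha> g \<and> mono g"
proof (induction n arbitrary: xs ms bs g)
  case 0
  then have xs: "xs = []" by simp
  from 0 have l: "length ms = 1" "length bs = 1" unfolding pl_with_def by auto
  have g: "g = (\<lambda>x. ms!0 * x + bs!0)" using 0 xs unfolding pl_with_def piece_def by auto
  have "ms!0 \<in> set ms" using l by simp
  then obtain k where "ms!0 = c * \<alpha> powi k" using 0 by auto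
  then have "ms!0 \<ge> 0" using a c by simp
  then have "mono g" unfolding g by (auto intro!: monoI mult_left_mono)
  then show ?case using g rep.base by auto
next
  case (Suc n)
  from Suc.prems obtain p xs' where xs: "xs = p # xs'" by (cases xs) auto
  from Suc.prems have pl: "sorted_wrt (<) xs" "length ms = Suc (Suc n)" "length bs = Suc (Suc n)"
    and H: "\<forall>i \<le> length xs. \<forall>x \<in> piece xs i. g x = ms ! i * x + bs ! i"
    unfolding pl_with_def by auto
  obtain m0 m1 ms' where ms: "ms = m0 # m1 # ms'" using pl(2)
    by (metis length_0_conv list.exhaust nat.distinct(1) length_Cons nat.inject)
  obtain b0 b1 bs' where bs: "bs = b0 # b1 # bs'" using pl(3)
    by (metis length_0_conv list.exhaust nat.distinct(1) length_Cons nat.inject)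
  obtain k0 where k0: "m0 = c * \<alpha> powi k0" using Suc.prems(3) ms by auto
  obtain k1 where k1: "m1 = c * \<alpha> powi k1" using Suc.prems(3) ms by auto
  have m1nn: "m1 \<ge> 0" using k1 a c by simp
  have lx: "length xs' = n" using Suc.prems(1) xs by simp
  have gp0: "\<And>x. x \<le> p \<Longrightarrow> g x = m0 * x + b0"
  proof -
    fix x assume "x \<le> p"
    then have "x \<in> piece xs 0" using xs unfolding piece_def by auto
    then have "g x = ms!0 * x + bs!0" using H[rule_format, of 0 x] by simp
    then show "g x = m0 * x + b0" using ms bs by simp
  qed
  have g1: "\<And>x. x \<in> piece xs 1 \<Longrightarrow> g x = m1 * x + b1"
  proof -
    fix x assume "x \<in> piece xs 1"
    moreover have "1 \<le> length xs" using xs by simp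
    ultimately have "g x = ms!1 * x + bs!1" using H[rule_format, of 1 x] by simp
    then show "g x = m1 * x + b1" using ms bs by simp
  qed
  have pless: "\<And>y. y \<in> set xs' \<Longrightarrow> p < y" using pl(1) xs by auto
  have "p \<in> piece xs 1" using xs pless unfolding piece_def by (cases xs') (auto intro: less_imp_le)
  then have gp1: "g p = m1 * p + b1" using g1 by blast
  have pless: "\<And>y. y \<in> set xs' \<Longrightarrow> p < y" using pl(1) xs by auto
  define g' where "g' = (\<lambda>x. if x \<le> p then m1 * x + b1 else g x)"
  have pl': "pl_with g' xs' (m1#ms') (b1#bs')"
    unfolding pl_with_def
  proof (intro conjI allI impI ballI)
    show "sorted_wrt (<) xs'" using pl(1) xs by simp
    show "length (m1 # ms') = length xs' + 1" using pl(2) ms lx by simp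
    show "length (b1 # bs') = length xs' + 1" using pl(3) bs lx by simp
  next
    fix i x assume i: "i \<le> length xs'" and x: "x \<in> piece xs' i"
    show "g' x = (m1 # ms') ! i * x + (b1 # bs') ! i"
    proof (cases i)
      case 0
      show ?thesis
      proof (cases "x \<le> p")
        case True then show ?thesis using 0 unfolding g'_def by simp
      next
        case False
        have "x \<in> piece xs 1" using x 0 False xs unfolding piece_def
          by (cases xs') auto
        then show ?thesis using g1 False 0 unfolding g'_def by simp
      qed
    next
      case (Suc j)
      have "xs' ! j \<in> set xs'" using i Suc by simp
      then have "p < xs' ! j" by (rule pless)
      moreover have "xs' \<noteq> []" using i Suc by auto
      moreover have "xs' ! j \<le> x" using x \<open>xs' \<noteq> []\<close> unfolding piece_def Suc by (simp split: if_splits) (subgoal_tac "length xs' - Suc 0 = j", simp, simp)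
      ultimately have "p < x" by linarith
      moreover have "x \<in> piece xs (Suc i)" using x piece_Cons_Suc[of i xs' p] i Suc xs by simp
      moreover have "Suc i \<le> length xs" using i xs by simp
      ultimately have "g' x = ms ! Suc i * x + bs ! Suc i" using H[rule_format, of "Suc i" x] unfolding g'_def by simp
      then show ?thesis using ms bs Suc by simp
    qed
  qed
  have "\<forall>m\<in>set (m1#ms'). \<exists>k::int. m = c * \<alpha> powi k" using Suc.prems(3) ms by auto
  then have IH: "rep \<alpha> g' \<and> mono g'" using Suc.IH[OF lx pl'] by blast
  define d where "d = k0 - k1"
  obtain \<phi> where phi: "rep \<alpha> \<phi>" "\<forall>t. \<phi> t = (if t \<ge> 0 then t else \<alpha> powi d * t)"
    using rho[OF a, of d] by blast
  have phineg: "\<And>t. t \<le> 0 \<Longrightarrow> \<phi> t = \<alpha> powi d * t" using phi(2) by (metis mult_zero_right order_antisym)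
  have dm: "\<alpha> powi d * m1 = m0" unfolding d_def k0 k1 using a
    by (simp add: power_int_diff field_simps)
  have "rep \<alpha> (\<lambda>x. 1 * g' x + (- g p))" using IH rep_affine_post by blast
  then have "rep \<alpha> (\<lambda>x. \<phi> (1 * g' x + (- g p)))" by (rule rep_comp[OF phi(1)])
  then have rh: "rep \<alpha> (\<lambda>x. 1 * \<phi> (1 * g' x + (- g p)) + g p)" by (rule rep_affine_post)
  have eq: "\<And>x. 1 * \<phi> (1 * g' x + (- g p)) + g p = g x"
  proof -
    fix x
    show "1 * \<phi> (1 * g' x + (- g p)) + g p = g x"
    proof (cases "x \<le> p")
      case True
      have e: "1 * g' x + (- g p) = m1 * (x - p)" using True gp1 unfolding g'_def by (simp add: algebra_simps)
      have "m1 * (x - p) \<le> 0" using True m1nn by (simp add: mult_nonneg_nonpos)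
      then have "\<phi> (m1 * (x - p)) = \<alpha> powi d * (m1 * (x - p))" by (rule phineg)
      also have "\<dots> = (\<alpha> powi d * m1) * (x - p)" by (rule mult.assoc[symmetric])
      also have "\<dots> = m0 * (x - p)" by (simp only: dm)
      finally have "\<phi> (m1 * (x - p)) = m0 * (x - p)" .
      then have "\<phi> (1 * g' x + (- g p)) = m0 * (x - p)" by (simp only: e)
      moreover have "g x = m0 * x + b0" using gp0[OF True] .
      moreover have "g p = m0 * p + b0" using gp0[of p] by simp
      moreover have "m0 * (x - p) = m0 * x - m0 * p" by (simp add: algebra_simps)
      ultimately show ?thesis by linarith
    next
      case False
      have "mono g'" using IH by blast
      moreover have "p \<le> x" using False by simp
      ultimately have "g' p \<le> g' x" by (rule monoD)
      moreover have "g' p = g p" using gp1 unfolding g'_def by simp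
      moreover have "g' x = g x" using False unfolding g'_def by simp
      ultimately have t0: "1 * g' x + (- g p) \<ge> 0" and gx: "g' x = g x" by linarith+
      have "\<phi> (1 * g' x + (- g p)) = 1 * g' x + (- g p)" using phi(2) t0 by simp
      then show ?thesis using gx by simp
    qed
  qed
  have "g = (\<lambda>x. 1 * \<phi> (1 * g' x + (- g p)) + g p)" by (rule ext) (rule eq[symmetric])
  moreover have "mono \<phi>" by (rule mono_rho[OF phi(2)]) (use a in simp)
  moreover have "mono (\<lambda>x. 1 * \<phi> (1 * g' x + (- g p)) + g p)"
  proof (rule monoI)
    fix u v :: real assume "u \<le> v"
    then have "g' u \<le> g' v" using IH by (auto dest: monoD)
    then have "\<phi> (1 * g' u + (- g p)) \<le> \<phi> (1 * g' v + (- g p))" using \<open>mono \<phi>\<close> by (simp add: monoD)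
    then show "1 * \<phi> (1 * g' u + (- g p)) + g p \<le> 1 * \<phi> (1 * g' v + (- g p)) + g p" by simp
  qed
  ultimately show ?case using rh by simp
qed

theorem mainTheorem4:
  fixes \<alpha> :: real and g :: "real \<Rightarrow> real"
  assumes "0 < \<alpha>" "\<alpha> < 1"
    and "alpha_power_pl \<alpha> g"
  shows "\<exists>L. \<exists>f \<in> N1 \<alpha> L. \<forall>x. g x = f x"
proof -
  from assms(3) obtain xs ms bs c where pl: "pl_with g xs ms bs"
    and sl: "\<forall>m \<in> set ms. \<exists>k::int. m = c * \<alpha> powi k"
    unfolding alpha_power_pl_def by blast
  have "rep \<alpha> g"
  proof (cases "c \<ge> 0")
    case True then show ?thesis using main_pos[OF assms(1,2) True refl pl sl] by blast
  next
    case False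
    have pl2: "pl_with (\<lambda>x. - g x) xs (map uminus ms) (map uminus bs)"
      using pl unfolding pl_with_def by auto
    have sl2: "\<forall>m \<in> set (map uminus ms). \<exists>k::int. m = (-c) * \<alpha> powi k" 
    proof
      fix m assume "m \<in> set (map uminus ms)"
      then obtain m' where "m' \<in> set ms" "m = - m'" by auto
      then obtain k where "m' = c * \<alpha> powi k" using sl by blast
      then show "\<exists>k::int. m = (-c) * \<alpha> powi k" using \<open>m = - m'\<close> by auto
    qed
    have "rep \<alpha> (\<lambda>x. - g x)" using main_pos[OF assms(1,2) _ refl pl2 sl2] False by simp
    then have "rep \<alpha> (\<lambda>x. (-1) * (- g x) + 0)" by (rule rep_affine_post)
    then show ?thesis by simp
  qed
  then obtain ps where ps: "length ps \<ge> 1" "g = net \<alpha> ps" using rep_net by blast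
  have "net \<alpha> ps \<in> N1 \<alpha> (length ps - 1)" unfolding N1_def using ps(1) by auto
  then show ?thesis using ps(2) by auto
qed

end
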